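(* Every binary orchard network $N$ admits an HGT-consistent labelling $t$ with the following additional property: whenever two distinct nodes $a,b$ of $N$ satisfy $t(a)=t(b)$, one of them is a parent of the other, the parent being a tree node and the child being a reticulation.
   Context: A (directed phylogenetic) network on a finite taxa set $X$ is a directed acyclic graph without parallel arcs whose nodes are of the following types: a unique root (indegree 0, outdegree 1); tree nodes (indegree 1, outdegree at least 2); reticulations (indegree at least 2, outdegree 1); leaves (indegree 1, outdegree 0), the leaves being bijectively labelled by $X$. Non-leaf nodes are called internal. A network is binary if every tree node and every reticulation has total degree (indegree plus outdegree) exactly 3. A tree is a network without reticulations. Orchard networks: An ordered pair of leaves $(x,y)$ is a cherry if $x$ and $y$ have a common parent; it is a reticulated cherry if the parent $p_x$ of $x$ is a reticulation and $p_x$ and $y$ have a common parent. Let $p_x,p_y$ be the parents of $x,y$. Reducing $(x,y)$ in a network $N$: if $(x,y)$ is a cherry, delete $x$ and suppress $p_x$ if it now has indegree 1 and outdegree 1; if $(x,y)$ is a reticulated cherry, delete the arc $(p_y,p_x)$ and suppress any resulting node of indegree 1 and outdegree 1; otherwise do nothing. (Suppressing a node $v$ with one parent $u$ and one child $w$ means deleting $v$ and adding the arc $(u,w)$.) For a sequence $S$ of ordered pairs, $NS$ denotes the result of reducing the pairs of $S$ in order. $N$ is orchard if there is a sequence $S$ such that $NS$ is a tree with exactly one leaf. HGT-consistent labelling: Let $N$ be a binary network with node set $V$. An HGT-consistent labelling of $N$ is a map $t:V\to\mathbb{R}$ such that (1) for every arc $(u,v)$, $t(u)\le t(v)$, and equality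 is allowed only if $v$ is a reticulation; (2) every internal node $u$ has a child $v$ with $t(u)<t(v)$; (3) for every reticulation $r$ with parents $u$ and $v$, exactly one of $t(u)=t(r)$ and $t(v)=t(r)$ holds. *)

theory Defs
  imports Main "HOL.Real"
begin

text \<open>A directed graph is given by a node set and an arc set (a set of pairs, so there
  are no parallel arcs). Leaves are identified with their taxon labels (the node type),
  which is harmless since the labelling is a bijection between leaves and X.\<close>

type_synonym 'a graph = "'a set \<times> ('a \<times> 'a) set"

definition nodes :: "'a graph \<Rightarrow> 'a set" where "nodes N = fst N"
definition arcs :: "'a graph \<Rightarrow> ('a \<times> 'a) set" where "arcs N = snd N"

definition indeg :: "'a graph \<Rightarrow> 'a \<Rightarrow> nat" where
  "indeg N v = card {u. (u, v) \<in> arcs N}"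
definition outdeg :: "'a graph \<Rightarrow> 'a \<Rightarrow> nat" where
  "outdeg N v = card {w. (v, w) \<in> arcs N}"

definition is_root :: "'a graph \<Rightarrow> 'a \<Rightarrow> bool" where
  "is_root N v \<longleftrightarrow> v \<in> nodes N \<and> indeg N v = 0 \<and> outdeg N v = 1"
definition is_tree_node :: "'a graph \<Rightarrow> 'a \<Rightarrow> bool" where
  "is_tree_node N v \<longleftrightarrow> v \<in> nodes N \<and> indeg N v = 1 \<and> outdeg N v \<ge> 2"
definition is_reticulation :: "'a graph \<Rightarrow> 'a \<Rightarrow> bool" where
  "is_reticulation N v \<longleftrightarrow> v \<in> nodes N \<and> indeg N v \<ge> 2 \<and> outdeg N v = 1"
definition is_leaf :: "'a graph \<Rightarrow> 'a \<Rightarrow> bool" where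
  "is_leaf N v \<longleftrightarrow> v \<in> nodes N \<and> indeg N v = 1 \<and> outdeg N v = 0"

definition leaves :: "'a graph \<Rightarrow> 'a set" where
  "leaves N = {v. is_leaf N v}"

definition is_network :: "'a graph \<Rightarrow> bool" where
  "is_network N \<longleftrightarrow>
     finite (nodes N) \<and>
     arcs N \<subseteq> nodes N \<times> nodes N \<and>
     acyclic (arcs N) \<and>
     (\<exists>!r. is_root N r) \<and>
     (\<forall>v \<in> nodes N. is_root N v \<or> is_tree_node N v \<or> is_reticulation N v \<or> is_leaf N v)"

definition is_binary_network :: "'a graph \<Rightarrow> bool" where
  "is_binary_network N \<longleftrightarrow> is_network N \<and>
     (\<forall>v. is_tree_node N v \<longrightarrow> outdeg N v = 2) \<and>
     (\<forall>v. is_reticulation N v \<longrightarrow> indeg N v = 2)"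

definition is_tree :: "'a graph \<Rightarrow> bool" where
  "is_tree N \<longleftrightarrow> is_network N \<and> (\<forall>v. \<not> is_reticulation N v)"

definition parent :: "'a graph \<Rightarrow> 'a \<Rightarrow> 'a" where
  "parent N x = (THE p. (p, x) \<in> arcs N)"

definition suppress :: "'a graph \<Rightarrow> 'a \<Rightarrow> 'a graph" where
  "suppress N v =
     (if v \<in> nodes N \<and> indeg N v = 1 \<and> outdeg N v = 1 then
        (let u = (THE u. (u, v) \<in> arcs N); w = (THE w. (v, w) \<in> arcs N)
         in (nodes N - {v}, {e \<in> arcs N. fst e \<noteq> v \<and> snd e \<noteq> v} \<union> {(u, w)}))
      else N)"

definition is_cherry :: "'a graph \<Rightarrow> 'a \<Rightarrow> 'a \<Rightarrow> bool" where
  "is_cherry N x y \<longleftrightarrow> x \<noteq> y \<and> is_leaf N x \<and> is_leaf N y \<and>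
     (\<exists>p. (p, x) \<in> arcs N \<and> (p, y) \<in> arcs N)"

definition is_reticulated_cherry :: "'a graph \<Rightarrow> 'a \<Rightarrow> 'a \<Rightarrow> bool" where
  "is_reticulated_cherry N x y \<longleftrightarrow> x \<noteq> y \<and> is_leaf N x \<and> is_leaf N y \<and>
     is_reticulation N (parent N x) \<and>
     (\<exists>p. (p, parent N x) \<in> arcs N \<and> (p, y) \<in> arcs N)"

definition reduce_pair :: "'a graph \<Rightarrow> 'a \<times> 'a \<Rightarrow> 'a graph" where
  "reduce_pair N xy =
     (let x = fst xy; y = snd xy; px = parent N x; py = parent N y in
      if is_cherry N x y then
        suppress (nodes N - {x}, {e \<in> arcs N. snd e \<noteq> x}) px
      else if is_reticulated_cherry N x y then
        suppress (suppress (nodes N, arcs N - {(py, px)}) py) px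
      else N)"

definition reduce_seq :: "'a graph \<Rightarrow> ('a \<times> 'a) list \<Rightarrow> 'a graph" where
  "reduce_seq N S = fold (\<lambda>xy M. reduce_pair M xy) S N"

definition is_orchard :: "'a graph \<Rightarrow> bool" where
  "is_orchard N \<longleftrightarrow>
     (\<exists>S. is_tree (reduce_seq N S) \<and> card (leaves (reduce_seq N S)) = 1)"

definition is_internal :: "'a graph \<Rightarrow> 'a \<Rightarrow> bool" where
  "is_internal N v \<longleftrightarrow> v \<in> nodes N \<and> \<not> is_leaf N v"

definition HGT_consistent :: "'a graph \<Rightarrow> ('a \<Rightarrow> real) \<Rightarrow> bool" where
  "HGT_consistent N t \<longleftrightarrow>
     (\<forall>(u, v) \<in> arcs N. t u \<le> t v \<and> (t u = t v \<longrightarrow> is_reticulation N v)) \<and>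
     (\<forall>u. is_internal N u \<longrightarrow> (\<exists>v. (u, v) \<in> arcs N \<and> t u < t v)) \<and>
     (\<forall>r u v. is_reticulation N r \<and> (u, r) \<in> arcs N \<and> (v, r) \<in> arcs N \<and> u \<noteq> v \<longrightarrow>
        ((t u = t r) \<noteq> (t v = t r)))"

end

theory Submission
  imports Defs
begin

definition good :: "'a graph \<Rightarrow> ('a \<Rightarrow> real) \<Rightarrow> bool" where
 "good N t \<longleftrightarrow> HGT_consistent N t \<and>
   (\<forall>a \<in> nodes N. \<forall>b \<in> nodes N. a \<noteq> b \<and> t a = t b \<longrightarrow>
              ((a, b) \<in> arcs N \<and> is_tree_node N a \<and> is_reticulation N b) \<or>
              ((b, a) \<in> arcs N \<and> is_tree_node N b \<and> is_reticulation N a)) \<and>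
   (\<forall>v \<in> nodes N. is_leaf N v \<longrightarrow> t v > 0) \<and>
   (\<forall>v \<in> nodes N. \<not> is_leaf N v \<longrightarrow> t v < 0)"

lemma net_fin: "is_network N \<Longrightarrow> finite (nodes N)" by (simp add: is_network_def)

lemma net_arcs: "is_network N \<Longrightarrow> (u,v) \<in> arcs N \<Longrightarrow> u \<in> nodes N \<and> v \<in> nodes N"
  unfolding is_network_def by blast

lemma net_irr: "is_network N \<Longrightarrow> (u,v) \<in> arcs N \<Longrightarrow> u \<noteq> v"
  unfolding is_network_def acyclic_def by (auto dest: r_into_trancl)

lemma net_no2: "is_network N \<Longrightarrow> (u,v) \<in> arcs N \<Longrightarrow> (v,u) \<in> arcs N \<Longrightarrow> False"
  unfolding is_network_def acyclic_def by (meson r_into_trancl trancl_trans)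

lemma fin_par: "is_network N \<Longrightarrow> finite {u. (u,v) \<in> arcs N}"
  by (rule finite_subset[of _ "nodes N"]) (auto dest: net_arcs net_fin)

lemma fin_chi: "is_network N \<Longrightarrow> finite {w. (v,w) \<in> arcs N}"
  by (rule finite_subset[of _ "nodes N"]) (auto dest: net_arcs net_fin)

lemma card1_eq: "card S = 1 \<Longrightarrow> a \<in> S \<Longrightarrow> S = {a}"
  by (auto simp: card_1_singleton_iff)

lemma card2_eq: "card S = 2 \<Longrightarrow> a \<in> S \<Longrightarrow> b \<in> S \<Longrightarrow> a \<noteq> b \<Longrightarrow> S = {a,b}"
proof -
  assume A: "card S = 2" "a \<in> S" "b \<in> S" "a \<noteq> b"
  have f: "finite S" using A(1) card.infinite by fastforce
  have "{a,b} \<subseteq> S" using A by auto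
  moreover have "card {a,b} = card S" using A by simp
  ultimately show "S = {a,b}" using card_subset_eq[OF f] by blast
qed

lemma leaf_par: "is_leaf N x \<Longrightarrow> (p,x) \<in> arcs N \<Longrightarrow> {u. (u,x) \<in> arcs N} = {p}"
  unfolding is_leaf_def indeg_def by (intro card1_eq) auto

lemma leaf_nochild: "is_network N \<Longrightarrow> is_leaf N x \<Longrightarrow> (x,w) \<notin> arcs N"
  unfolding is_leaf_def outdeg_def using fin_chi[of N x] by auto

lemma ret_chi: "is_reticulation N r \<Longrightarrow> (r,w) \<in> arcs N \<Longrightarrow> {w'. (r,w') \<in> arcs N} = {w}"
  unfolding is_reticulation_def outdeg_def by (intro card1_eq) auto

lemma tree_par: "is_tree_node N p \<Longrightarrow> (g,p) \<in> arcs N \<Longrightarrow> {u. (u,p) \<in> arcs N} = {g}"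
  unfolding is_tree_node_def indeg_def by (intro card1_eq) auto

lemma tree_has_par: "is_tree_node N p \<Longrightarrow> \<exists>g. (g,p) \<in> arcs N"
  unfolding is_tree_node_def indeg_def by (metis card_1_singletonE mem_Collect_eq singletonI)

lemma ret_par: "is_binary_network N \<Longrightarrow> is_reticulation N r \<Longrightarrow> (p,r) \<in> arcs N \<Longrightarrow>
   \<exists>q. q \<noteq> p \<and> {u. (u,r) \<in> arcs N} = {p,q}"
proof -
  assume a: "is_binary_network N" "is_reticulation N r" "(p,r) \<in> arcs N"
  then have "card {u. (u,r) \<in> arcs N} = 2" unfolding is_binary_network_def indeg_def by auto
  then obtain a b where ab: "{u. (u,r) \<in> arcs N} = {a,b}" "a \<noteq> b" by (auto simp: card_2_iff)
  then show ?thesis using a(3) by (metis insert_commute insert_iff mem_Collect_eq singletonD)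
qed

lemma two_children: "is_binary_network N \<Longrightarrow> (p,a) \<in> arcs N \<Longrightarrow> (p,b) \<in> arcs N \<Longrightarrow> a \<noteq> b \<Longrightarrow>
   is_tree_node N p \<and> {w. (p,w) \<in> arcs N} = {a,b}"
proof -
  assume A: "is_binary_network N" "(p,a) \<in> arcs N" "(p,b) \<in> arcs N" "a \<noteq> b"
  have nw: "is_network N" using A unfolding is_binary_network_def by simp
  have "{a,b} \<subseteq> {w. (p,w) \<in> arcs N}" using A by auto
  then have "card {a,b} \<le> outdeg N p" unfolding outdeg_def using fin_chi[OF nw] card_mono by blast
  then have o2: "outdeg N p \<ge> 2" using A(4) by simp
  have "p \<in> nodes N" using net_arcs[OF nw A(2)] by simp
  then have "is_root N p \<or> is_tree_node N p \<or> is_reticulation N p \<or> is_leaf N p"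
    using nw unfolding is_network_def by blast
  then have "is_tree_node N p" using o2 unfolding is_root_def is_reticulation_def is_leaf_def by auto
  moreover then have "outdeg N p = 2" using A unfolding is_binary_network_def by simp
  ultimately show ?thesis using A card2_eq[of "{w. (p,w) \<in> arcs N}" a b] unfolding outdeg_def by auto
qed

lemma transfer:
  assumes bn: "is_binary_network N"
   and N': "N' = (V', A')"
   and sub: "V' \<subseteq> nodes N"
   and arcs': "A' \<subseteq> V' \<times> V'"
   and tr: "A' \<subseteq> (arcs N)\<^sup>+"
   and roots: "\<And>v. is_root N v \<Longrightarrow> v \<in> V'"
   and deg: "\<And>w. w \<in> V' \<Longrightarrow> indeg N' w = indeg N w \<and> outdeg N' w = outdeg N w"
  shows "is_binary_network N'"
    and "is_root N' w \<longleftrightarrow> w \<in> V' \<and> is_root N w"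
    and "is_tree_node N' w \<longleftrightarrow> w \<in> V' \<and> is_tree_node N w"
    and "is_reticulation N' w \<longleftrightarrow> w \<in> V' \<and> is_reticulation N w"
    and "is_leaf N' w \<longleftrightarrow> w \<in> V' \<and> is_leaf N w"
proof -
  have nw: "is_network N" using bn by (simp add: is_binary_network_def)
  have nd: "nodes N' = V'" "arcs N' = A'" using N' by (simp_all add: nodes_def arcs_def)
  have T1: "\<And>w. is_root N' w \<longleftrightarrow> w \<in> V' \<and> is_root N w"
    unfolding is_root_def nd using deg sub by auto
  have T2: "\<And>w. is_tree_node N' w \<longleftrightarrow> w \<in> V' \<and> is_tree_node N w"
    unfolding is_tree_node_def nd using deg sub by auto
  have T3: "\<And>w. is_reticulation N' w \<longleftrightarrow> w \<in> V' \<and> is_reticulation N w"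
    unfolding is_reticulation_def nd using deg sub by auto
  have T4: "\<And>w. is_leaf N' w \<longleftrightarrow> w \<in> V' \<and> is_leaf N w"
    unfolding is_leaf_def nd using deg sub by auto
  show "is_root N' w \<longleftrightarrow> w \<in> V' \<and> is_root N w" by (rule T1)
  show "is_tree_node N' w \<longleftrightarrow> w \<in> V' \<and> is_tree_node N w" by (rule T2)
  show "is_reticulation N' w \<longleftrightarrow> w \<in> V' \<and> is_reticulation N w" by (rule T3)
  show "is_leaf N' w \<longleftrightarrow> w \<in> V' \<and> is_leaf N w" by (rule T4)
  have fin: "finite V'" using sub net_fin[OF nw] finite_subset by blast
  have ac: "acyclic A'"
  proof -
    have "A'\<^sup>+ \<subseteq> ((arcs N)\<^sup>+)\<^sup>+" using tr trancl_mono_subset by blast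
    then have "A'\<^sup>+ \<subseteq> (arcs N)\<^sup>+" by simp
    moreover have "acyclic (arcs N)" using nw unfolding is_network_def by simp
    ultimately show ?thesis unfolding acyclic_def by blast
  qed
  have ex: "\<exists>!r. is_root N r" using nw unfolding is_network_def by simp
  then obtain \<rho> where r: "is_root N \<rho>" by blast
  have ru: "\<And>v. is_root N v \<Longrightarrow> v = \<rho>" using ex r by blast
  have ur: "\<exists>!r. is_root N' r"
  proof
    show "is_root N' \<rho>" using T1 r roots by simp
    show "\<And>v. is_root N' v \<Longrightarrow> v = \<rho>" using T1 ru by simp
  qed
  have cl0: "\<forall>v \<in> nodes N. is_root N v \<or> is_tree_node N v \<or> is_reticulation N v \<or> is_leaf N v"
    using nw unfolding is_network_def by simp
  have cl: "\<forall>v \<in> nodes N'. is_root N' v \<or> is_tree_node N' v \<or> is_reticulation N' v \<or> is_leaf N' v"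
  proof
    fix v assume "v \<in> nodes N'"
    then have "v \<in> V'" "v \<in> nodes N" using nd sub by auto
    then show "is_root N' v \<or> is_tree_node N' v \<or> is_reticulation N' v \<or> is_leaf N' v"
      using cl0 T1 T2 T3 T4 by simp
  qed
  have nw': "is_network N'" unfolding is_network_def using fin arcs' ac ur cl nd by simp
  have b1: "\<forall>v. is_tree_node N' v \<longrightarrow> outdeg N' v = 2"
    using bn deg T2 unfolding is_binary_network_def by simp
  have b2: "\<forall>v. is_reticulation N' v \<longrightarrow> indeg N' v = 2"
    using bn deg T3 unfolding is_binary_network_def by simp
  show "is_binary_network N'" unfolding is_binary_network_def using nw' b1 b2 by simp
qed

lemma leaf_not_ret: "is_leaf N v \<Longrightarrow> \<not> is_reticulation N v"
  unfolding is_leaf_def is_reticulation_def by auto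
lemma leaf_not_tree: "is_leaf N v \<Longrightarrow> \<not> is_tree_node N v"
  unfolding is_leaf_def is_tree_node_def by auto
lemma tree_not_ret: "is_tree_node N v \<Longrightarrow> \<not> is_reticulation N v"
  unfolding is_tree_node_def is_reticulation_def by auto
lemma root_not_leaf: "is_root N v \<Longrightarrow> \<not> is_leaf N v"
  unfolding is_leaf_def is_root_def by auto
lemma root_not_tree: "is_root N v \<Longrightarrow> \<not> is_tree_node N v"
  unfolding is_tree_node_def is_root_def by auto
lemma root_not_ret: "is_root N v \<Longrightarrow> \<not> is_reticulation N v"
  unfolding is_reticulation_def is_root_def by auto

lemma set1_the: "{u. P u} = {a} \<Longrightarrow> (THE u. P u) = a"
  by (auto simp: set_eq_iff)

lemma cherry_reduce:
  assumes bn: "is_binary_network N" and ch: "is_cherry N x y"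
  obtains p g where "(p,x) \<in> arcs N" "(p,y) \<in> arcs N" "(g,p) \<in> arcs N"
    "is_tree_node N p" "{w. (p,w) \<in> arcs N} = {x,y}" "{u. (u,p) \<in> arcs N} = {g}"
    "{u. (u,x) \<in> arcs N} = {p}" "{u. (u,y) \<in> arcs N} = {p}"
    "reduce_pair N (x,y) = (nodes N - {x} - {p},
        {e \<in> {e \<in> arcs N. snd e \<noteq> x}. fst e \<noteq> p \<and> snd e \<noteq> p} \<union> {(g,y)})"
proof -
  have nw: "is_network N" using bn by (simp add: is_binary_network_def)
  from ch obtain p where px: "(p,x) \<in> arcs N" and py: "(p,y) \<in> arcs N" and xy: "x \<noteq> y"
    and lx: "is_leaf N x" and ly: "is_leaf N y" unfolding is_cherry_def by blast
  have tp: "is_tree_node N p" and cp: "{w. (p,w) \<in> arcs N} = {x,y}"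
    using two_children[OF bn px py xy] by auto
  obtain g where gp: "(g,p) \<in> arcs N" using tree_has_par[OF tp] by blast
  have pp: "{u. (u,p) \<in> arcs N} = {g}" using tree_par[OF tp gp] .
  have parx: "{u. (u,x) \<in> arcs N} = {p}" using leaf_par[OF lx px] .
  have pary: "{u. (u,y) \<in> arcs N} = {p}" using leaf_par[OF ly py] .
  have parent: "parent N x = p" unfolding parent_def using set1_the[OF parx] .
  define G1 where "G1 = (nodes N - {x}, {e \<in> arcs N. snd e \<noteq> x})"
  have nG1: "nodes G1 = nodes N - {x}" and aG1: "arcs G1 = {e \<in> arcs N. snd e \<noteq> x}"
    unfolding G1_def by (simp_all add: nodes_def arcs_def)
  have pne: "p \<noteq> x" using net_irr[OF nw px] .
  have pin: "p \<in> nodes N" using net_arcs[OF nw px] by simp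
  have in1: "{u. (u,p) \<in> arcs G1} = {g}" using pp pne unfolding aG1 by auto
  have out1: "{w. (p,w) \<in> arcs G1} = {y}" using cp xy unfolding aG1 by auto
  have "suppress G1 p = (nodes N - {x} - {p}, {e \<in> {e \<in> arcs N. snd e \<noteq> x}. fst e \<noteq> p \<and> snd e \<noteq> p} \<union> {(g,y)})"
  proof -
    have c: "p \<in> nodes G1 \<and> indeg G1 p = 1 \<and> outdeg G1 p = 1"
      using in1 out1 pne pin nG1 unfolding indeg_def outdeg_def by simp
    show ?thesis unfolding suppress_def Let_def set1_the[OF in1] set1_the[OF out1]
      using c nG1 aG1 by simp
  qed
  moreover have "reduce_pair N (x,y) = suppress G1 p"
    unfolding reduce_pair_def G1_def using ch parent by (simp add: Let_def)
  ultimately show thesis using that px py gp tp cp pp parx pary by simp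
qed

lemma good_parts:
  assumes "good N t"
  shows "\<And>a b. (a,b) \<in> arcs N \<Longrightarrow> t a \<le> t b \<and> (t a = t b \<longrightarrow> is_reticulation N b)"
    and "\<And>u. is_internal N u \<Longrightarrow> \<exists>v. (u,v) \<in> arcs N \<and> t u < t v"
    and "\<And>r u v. is_reticulation N r \<Longrightarrow> (u,r) \<in> arcs N \<Longrightarrow> (v,r) \<in> arcs N \<Longrightarrow> u \<noteq> v \<Longrightarrow>
            (t u = t r) \<noteq> (t v = t r)"
    and "\<And>a b. a \<in> nodes N \<Longrightarrow> b \<in> nodes N \<Longrightarrow> a \<noteq> b \<Longrightarrow> t a = t b \<Longrightarrow>
              ((a, b) \<in> arcs N \<and> is_tree_node N a \<and> is_reticulation N b) \<or>
              ((b, a) \<in> arcs N \<and> is_tree_node N b \<and> is_reticulation N a)"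
    and "\<And>v. v \<in> nodes N \<Longrightarrow> is_leaf N v \<Longrightarrow> t v > 0"
    and "\<And>v. v \<in> nodes N \<Longrightarrow> \<not> is_leaf N v \<Longrightarrow> t v < 0"
  using assms unfolding good_def HGT_consistent_def by auto

lemma good_intro:
  assumes "\<And>a b. (a,b) \<in> arcs N \<Longrightarrow> t a \<le> t b \<and> (t a = t b \<longrightarrow> is_reticulation N b)"
    and "\<And>u. is_internal N u \<Longrightarrow> \<exists>v. (u,v) \<in> arcs N \<and> t u < t v"
    and "\<And>r u v. is_reticulation N r \<Longrightarrow> (u,r) \<in> arcs N \<Longrightarrow> (v,r) \<in> arcs N \<Longrightarrow> u \<noteq> v \<Longrightarrow>
            (t u = t r) \<noteq> (t v = t r)"
    and "\<And>a b. a \<in> nodes N \<Longrightarrow> b \<in> nodes N \<Longrightarrow> a \<noteq> b \<Longrightarrow> t a = t b \<Longrightarrow>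
              ((a, b) \<in> arcs N \<and> is_tree_node N a \<and> is_reticulation N b) \<or>
              ((b, a) \<in> arcs N \<and> is_tree_node N b \<and> is_reticulation N a)"
    and "\<And>v. v \<in> nodes N \<Longrightarrow> is_leaf N v \<Longrightarrow> t v > 0"
    and "\<And>v. v \<in> nodes N \<Longrightarrow> \<not> is_leaf N v \<Longrightarrow> t v < 0"
  shows "good N t"
  unfolding good_def HGT_consistent_def using assms by auto

lemma fresh_neg:
  fixes t :: "'a \<Rightarrow> real"
  assumes "finite I" "I \<noteq> {}" "\<And>v. v \<in> I \<Longrightarrow> t v < 0"
  shows "\<exists>m. m < 0 \<and> (\<forall>v\<in>I. t v < m)"
proof -
  have f: "finite (t ` I)" "t ` I \<noteq> {}" using assms by auto
  have "Max (t ` I) \<in> t ` I" using Max_in[OF f] .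
  then have neg: "Max (t ` I) < 0" using assms(3) by auto
  have "\<forall>v\<in>I. t v \<le> Max (t ` I)" using Max_ge[OF f(1)] by auto
  then show ?thesis using neg by (intro exI[of _ "Max (t ` I) / 2"]) auto
qed

lemma fresh_top:
  fixes t :: "'a \<Rightarrow> real"
  assumes "finite V"
  shows "\<exists>F. F > 0 \<and> (\<forall>v\<in>V. t v < F)"
proof -
  have f: "finite (insert 0 (t ` V))" using assms by auto
  have "\<forall>v\<in>V. t v \<le> Max (insert 0 (t ` V))" using Max_ge[OF f] by auto
  moreover have "0 \<le> Max (insert 0 (t ` V))" using Max_ge[OF f] by auto
  ultimately show ?thesis by (intro exI[of _ "Max (insert 0 (t ` V)) + 1"]) auto
qed

lemma cherry_step:
  assumes bn: "is_binary_network N" and ch: "is_cherry N x y"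
  shows "is_binary_network (reduce_pair N (x,y)) \<and>
         (\<forall>t'. good (reduce_pair N (x,y)) t' \<longrightarrow> (\<exists>t. good N t))"
proof -
  have nw: "is_network N" using bn by (simp add: is_binary_network_def)
  obtain p g where px: "(p,x) \<in> arcs N" and py: "(p,y) \<in> arcs N" and gp: "(g,p) \<in> arcs N"
    and tp: "is_tree_node N p" and cp: "{w. (p,w) \<in> arcs N} = {x,y}" and pp: "{u. (u,p) \<in> arcs N} = {g}"
    and parx: "{u. (u,x) \<in> arcs N} = {p}" and pary: "{u. (u,y) \<in> arcs N} = {p}"
    and red: "reduce_pair N (x,y) = (nodes N - {x} - {p},
        {e \<in> {e \<in> arcs N. snd e \<noteq> x}. fst e \<noteq> p \<and> snd e \<noteq> p} \<union> {(g,y)})"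
    using cherry_reduce[OF bn ch] by blast
  have lx: "is_leaf N x" and ly: "is_leaf N y" and xy: "x \<noteq> y" using ch unfolding is_cherry_def by auto
  have pw1: "\<And>w. (p,w) \<in> arcs N \<longleftrightarrow> w = x \<or> w = y" using cp by blast
  have pw2: "\<And>u. (u,p) \<in> arcs N \<longleftrightarrow> u = g" using pp by blast
  have pw3: "\<And>u. (u,x) \<in> arcs N \<longleftrightarrow> u = p" using parx by blast
  have pw4: "\<And>u. (u,y) \<in> arcs N \<longleftrightarrow> u = p" using pary by blast
  have nx: "\<And>w. (x,w) \<notin> arcs N" using leaf_nochild[OF nw lx] .
  have ny: "\<And>w. (y,w) \<notin> arcs N" using leaf_nochild[OF nw ly] .
  have d: "p \<noteq> x" "p \<noteq> y" "g \<noteq> p" "g \<noteq> x" "g \<noteq> y"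
    using net_irr[OF nw px] net_irr[OF nw py] net_irr[OF nw gp] nx ny gp by auto
  have inV: "x \<in> nodes N" "y \<in> nodes N" "p \<in> nodes N" "g \<in> nodes N"
    using net_arcs[OF nw px] net_arcs[OF nw py] net_arcs[OF nw gp] by auto
  define V' where "V' = nodes N - {x} - {p}"
  define A' where "A' = {e \<in> {e \<in> arcs N. snd e \<noteq> x}. fst e \<noteq> p \<and> snd e \<noteq> p} \<union> {(g,y)}"
  define N' where "N' = reduce_pair N (x,y)"
  have N'eq: "N' = (V', A')" using red unfolding N'_def V'_def A'_def by simp
  have nd: "nodes N' = V'" "arcs N' = A'" using N'eq by (simp_all add: nodes_def arcs_def)
  have memA': "\<And>a b. (a,b) \<in> A' \<longleftrightarrow> ((a,b) \<in> arcs N \<and> b \<noteq> x \<and> a \<noteq> p \<and> b \<noteq> p) \<or> (a = g \<and> b = y)"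
    unfolding A'_def by auto
  have sub: "V' \<subseteq> nodes N" unfolding V'_def by auto
  have arcs': "A' \<subseteq> V' \<times> V'"
  proof
    fix e assume "e \<in> A'"
    then obtain a b where e: "e = (a,b)" and ab: "(a,b) \<in> A'" by (cases e) auto
    show "e \<in> V' \<times> V'"
    proof (cases "a = g \<and> b = y")
      case True then show ?thesis using e d inV xy unfolding V'_def by auto
    next
      case False
      then have "(a,b) \<in> arcs N" "b \<noteq> x" "a \<noteq> p" "b \<noteq> p" using ab memA' by auto
      moreover have "a \<noteq> x" using nx calculation(1) by auto
      ultimately show ?thesis using e net_arcs[OF nw] unfolding V'_def by auto
    qed
  qed
  have tr: "A' \<subseteq> (arcs N)\<^sup>+"
  proof
    fix e assume "e \<in> A'"
    then obtain a b where e: "e = (a,b)" and ab: "(a,b) \<in> A'" by (cases e) auto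
    show "e \<in> (arcs N)\<^sup>+"
    proof (cases "a = g \<and> b = y")
      case True then show ?thesis using e gp py by (meson r_into_trancl trancl_into_trancl)
    next
      case False then show ?thesis using e ab memA' by auto
    qed
  qed
  have roots: "\<And>v. is_root N v \<Longrightarrow> v \<in> V'"
    using root_not_leaf[of N] root_not_tree[of N] lx tp unfolding V'_def is_root_def by blast
  have fin: "finite (nodes N)" using net_fin[OF nw] .
  have deg: "\<And>w. w \<in> V' \<Longrightarrow> indeg N' w = indeg N w \<and> outdeg N' w = outdeg N w"
  proof -
    fix w assume wV: "w \<in> V'"
    have "indeg N' w = indeg N w"
    proof (cases "w = y")
      case True
      have "{a. (a,w) \<in> A'} = {g}" using True memA' pw4 by auto
      then show ?thesis using True pary unfolding indeg_def nd by simp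
    next
      case False
      have "{a. (a,w) \<in> A'} = {a. (a,w) \<in> arcs N}" using False memA' pw1 wV unfolding V'_def by auto
      then show ?thesis unfolding indeg_def nd by simp
    qed
    moreover have "outdeg N' w = outdeg N w"
    proof (cases "w = g")
      case True
      have e: "{b. (w,b) \<in> A'} = insert y ({b. (g,b) \<in> arcs N} - {p})"
        using True memA' pw3 d by auto
      have "y \<notin> {b. (g,b) \<in> arcs N} - {p}" using pw4 d by auto
      moreover have "finite ({b. (g,b) \<in> arcs N} - {p})" using fin_chi[OF nw] by auto
      ultimately have "card {b. (w,b) \<in> A'} = Suc (card ({b. (g,b) \<in> arcs N} - {p}))"
        using e by simp
      moreover have "card ({b. (g,b) \<in> arcs N} - {p}) = card {b. (g,b) \<in> arcs N} - 1"
        using gp fin_chi[OF nw] by (simp add: card_Diff_singleton)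
      moreover have "card {b. (g,b) \<in> arcs N} \<ge> 1"
        using gp fin_chi[OF nw, of g] card_0_eq[of "{b. (g,b) \<in> arcs N}"] by fastforce
      ultimately show ?thesis using True unfolding outdeg_def nd by simp
    next
      case False
      have "{b. (w,b) \<in> A'} = {b. (w,b) \<in> arcs N}" using False memA' pw2 pw3 wV unfolding V'_def by auto
      then show ?thesis unfolding outdeg_def nd by simp
    qed
    ultimately show "indeg N' w = indeg N w \<and> outdeg N' w = outdeg N w" by simp
  qed
  note TR = transfer[OF bn N'eq sub arcs' tr roots deg]
  have bn': "is_binary_network N'" using TR(1) .
  have T2: "\<And>w. is_tree_node N' w \<longleftrightarrow> w \<in> V' \<and> is_tree_node N w" using TR(3) by blast
  have T3: "\<And>w. is_reticulation N' w \<longleftrightarrow> w \<in> V' \<and> is_reticulation N w" using TR(4) by blast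
  have T4: "\<And>w. is_leaf N' w \<longleftrightarrow> w \<in> V' \<and> is_leaf N w" using TR(5) by blast
  have ext: "\<exists>t. good N t" if gd: "good N' t'" for t'
  proof -
    note G = good_parts[OF gd, unfolded nd]
    have finV': "finite V'" using sub fin finite_subset by blast
    define I where "I = {v \<in> V'. \<not> is_leaf N' v}"
    have gV: "g \<in> V'" unfolding V'_def using inV d by simp
    have "\<not> is_leaf N g" using leaf_nochild[OF nw] gp by blast
    then have gI: "g \<in> I" unfolding I_def using gV T4 by simp
    obtain m where m: "m < 0" "\<forall>v\<in>I. t' v < m"
      using fresh_neg[of I t'] finV' gI G(6) unfolding I_def by auto
    obtain F where F: "F > 0" "\<forall>v\<in>V'. t' v < F" using fresh_top[OF finV', of t'] by auto
    have yV: "y \<in> V'" unfolding V'_def using inV xy d by auto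
    have yl: "is_leaf N' y" using T4 yV ly by simp
    have hm: "\<And>v. v \<in> V' \<Longrightarrow> \<not> is_leaf N' v \<Longrightarrow> t' v < m" using m unfolding I_def by auto
    have nm: "\<And>v. v \<in> V' \<Longrightarrow> t' v \<noteq> m"
    proof -
      fix v assume "v \<in> V'"
      then show "t' v \<noteq> m" using hm[of v] G(5)[of v] m by (cases "is_leaf N' v") auto
    qed
    define t where "t = (\<lambda>v. if v = p then m else if v = x then F else t' v)"
    have tp': "t p = m" "t x = F" using d unfolding t_def by auto
    have tV: "\<And>v. v \<in> V' \<Longrightarrow> t v = t' v" unfolding t_def V'_def by auto
    have gm: "t' g < m" using m gI by auto
    have key: "\<And>a b. (a,b) \<in> A' \<Longrightarrow> is_reticulation N' b \<Longrightarrow> (a,b) \<in> arcs N"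
    proof -
      fix a b assume "(a,b) \<in> A'" "is_reticulation N' b"
      then show "(a,b) \<in> arcs N" using memA'[of a b] leaf_not_ret[OF yl] by auto
    qed
    show ?thesis
    proof (intro exI[of _ t] good_intro)
      fix a b assume ab: "(a,b) \<in> arcs N"
      show "t a \<le> t b \<and> (t a = t b \<longrightarrow> is_reticulation N b)"
      proof (cases "b = p")
        case True then have "a = g" using pw2 ab by simp
        then show ?thesis using True gm tV gV tp' by simp
      next
        case bp: False
        show ?thesis
        proof (cases "b = x")
          case True then have "a = p" using pw3 ab by simp
          then show ?thesis using True tp' m F by simp
        next
          case bx: False
          show ?thesis
          proof (cases "a = p")
            case True then have "b = y" using pw1 ab bx by simp
            then show ?thesis using True tp' m G(5)[of y] yV yl tV by fastforce
          next
            case False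
            then have ab': "(a,b) \<in> A'" using ab bp bx memA' by simp
            then have "a \<in> V'" "b \<in> V'" using arcs' by auto
            then show ?thesis using G(1)[OF ab'] tV T3 by simp
          qed
        qed
      qed
    next
      fix u assume iu: "is_internal N u"
      show "\<exists>v. (u,v) \<in> arcs N \<and> t u < t v"
      proof (cases "u = p")
        case True then show ?thesis using px tp' m F by auto
      next
        case up: False
        have ux: "u \<noteq> x" using iu lx unfolding is_internal_def by auto
        then have uV: "u \<in> V'" using iu up unfolding is_internal_def V'_def by auto
        then have "is_internal N' u" using iu T4 nd unfolding is_internal_def by auto
        then obtain v where uv: "(u,v) \<in> A'" "t' u < t' v" using G(2) by blast
        show ?thesis
        proof (cases "u = g \<and> v = y")
          case True then show ?thesis using gp gm tV uV tp' by (intro exI[of _ p]) auto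
        next
          case False
          then have "(u,v) \<in> arcs N" using uv memA' by auto
          moreover have "v \<in> V'" using uv(1) arcs' by auto
          ultimately show ?thesis using uv tV uV by auto
        qed
      qed
    next
      fix r u v assume r: "is_reticulation N r" and ur: "(u,r) \<in> arcs N" and vr: "(v,r) \<in> arcs N"
        and uv: "u \<noteq> v"
      have rr: "r \<noteq> p" "r \<noteq> x" "r \<noteq> y" using r tree_not_ret[OF tp] leaf_not_ret[OF lx] leaf_not_ret[OF ly] by auto
      have rV: "r \<in> V'" using r rr unfolding V'_def is_reticulation_def by auto
      have "u \<noteq> p" "v \<noteq> p" using ur vr pw1 rr by auto
      moreover have "u \<noteq> x" "v \<noteq> x" using ur vr nx by auto
      ultimately have A: "(u,r) \<in> A'" "(v,r) \<in> A'" using ur vr rr memA' by auto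
      then have "u \<in> V'" "v \<in> V'" using arcs' by auto
      then show "(t u = t r) \<noteq> (t v = t r)" using G(3)[OF _ A uv] T3 r rV tV by simp
    next
      fix a b assume aN: "a \<in> nodes N" and bN: "b \<in> nodes N" and ab: "a \<noteq> b" and e: "t a = t b"
      have vals: "\<And>v. v \<in> nodes N \<Longrightarrow> v \<noteq> p \<Longrightarrow> v \<noteq> x \<Longrightarrow> v \<in> V'" unfolding V'_def by auto
      have aV: "a \<in> V'"
      proof (rule ccontr)
        assume "a \<notin> V'"
        then have "a = p \<or> a = x" using vals aN by auto
        then show False using e ab tp' vals[OF bN] tV nm F m by (metis less_irrefl not_less_iff_gr_or_eq)
      qed
      have bV: "b \<in> V'"
      proof (rule ccontr)
        assume "b \<notin> V'"
        then have "b = p \<or> b = x" using vals bN by auto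
        then show False using e ab tp' aV tV nm F m by (metis less_irrefl not_less_iff_gr_or_eq)
      qed
      have "t' a = t' b" using e tV aV bV by simp
      then have "((a, b) \<in> A' \<and> is_tree_node N' a \<and> is_reticulation N' b) \<or>
              ((b, a) \<in> A' \<and> is_tree_node N' b \<and> is_reticulation N' a)" using G(4) aV bV ab by blast
      then show "((a, b) \<in> arcs N \<and> is_tree_node N a \<and> is_reticulation N b) \<or>
              ((b, a) \<in> arcs N \<and> is_tree_node N b \<and> is_reticulation N a)"
        using key T2 T3 by blast
    next
      fix v assume vN: "v \<in> nodes N" and lv: "is_leaf N v"
      show "t v > 0"
      proof (cases "v = x")
        case True then show ?thesis using tp' F by simp
      next
        case False
        moreover have "v \<noteq> p" using lv leaf_not_tree[OF lv] tp by blast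
        ultimately
        have "v \<in> V'" using False vN unfolding V'_def by auto
        then show ?thesis using G(5) T4 lv tV by simp
      qed
    next
      fix v assume vN: "v \<in> nodes N" and lv: "\<not> is_leaf N v"
      show "t v < 0"
      proof (cases "v = p")
        case True then show ?thesis using tp' m by simp
      next
        case False
        moreover have "v \<noteq> x" using lv lx by blast
        ultimately have "v \<in> V'" using vN unfolding V'_def by auto
        then show ?thesis using G(6) T4 lv tV by simp
      qed
    qed
  qed
  show ?thesis using bn' ext unfolding N'_def by blast
qed

lemma card_swap: "finite S \<Longrightarrow> a \<in> S \<Longrightarrow> c \<notin> S \<Longrightarrow> card (insert c (S - {a})) = card S"
proof -
  assume A: "finite S" "a \<in> S" "c \<notin> S"
  then have "card (insert c (S - {a})) = Suc (card (S - {a}))" by simp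
  also have "\<dots> = card S"
  proof -
    have "card S > 0" using A by (auto simp: card_gt_0_iff)
    then show ?thesis using A by (simp add: card_Diff_singleton)
  qed
  finally show ?thesis .
qed

lemma leaf_has_par: "is_leaf N x \<Longrightarrow> \<exists>r. (r,x) \<in> arcs N"
  unfolding is_leaf_def indeg_def by (metis card_1_singletonE mem_Collect_eq singletonI)

lemma ret_reduce:
  assumes bn: "is_binary_network N" and rc: "is_reticulated_cherry N x y" and nch: "\<not> is_cherry N x y"
  obtains r p g q where "(r,x) \<in> arcs N" "(p,r) \<in> arcs N" "(p,y) \<in> arcs N" "(g,p) \<in> arcs N"
    "(q,r) \<in> arcs N" "q \<noteq> p"
    "is_tree_node N p" "is_reticulation N r" "{w. (p,w) \<in> arcs N} = {r,y}" "{u. (u,p) \<in> arcs N} = {g}"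
    "{u. (u,x) \<in> arcs N} = {r}" "{u. (u,y) \<in> arcs N} = {p}" "{u. (u,r) \<in> arcs N} = {p,q}"
    "{w. (r,w) \<in> arcs N} = {x}"
    "reduce_pair N (x,y) = (nodes N - {p} - {r},
        {e \<in> {e \<in> arcs N - {(p,r)}. fst e \<noteq> p \<and> snd e \<noteq> p} \<union> {(g,y)}. fst e \<noteq> r \<and> snd e \<noteq> r}
         \<union> {(q,x)})"
proof -
  have nw: "is_network N" using bn by (simp add: is_binary_network_def)
  have lx: "is_leaf N x" and ly: "is_leaf N y" and xy: "x \<noteq> y"
    and rr: "is_reticulation N (parent N x)" using rc unfolding is_reticulated_cherry_def by auto
  obtain r where rx: "(r,x) \<in> arcs N" using leaf_has_par[OF lx] by blast
  have parx: "{u. (u,x) \<in> arcs N} = {r}" using leaf_par[OF lx rx] .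
  have parent: "parent N x = r" unfolding parent_def using set1_the[OF parx] .
  obtain p where pr: "(p,r) \<in> arcs N" and py: "(p,y) \<in> arcs N"
    using rc parent unfolding is_reticulated_cherry_def by auto
  have rret: "is_reticulation N r" using rr parent by simp
  have ry: "r \<noteq> y" using rret leaf_not_ret[OF ly] by auto
  have tp: "is_tree_node N p" and cp: "{w. (p,w) \<in> arcs N} = {r,y}"
    using two_children[OF bn pr py ry] by auto
  obtain g where gp: "(g,p) \<in> arcs N" using tree_has_par[OF tp] by blast
  have pp: "{u. (u,p) \<in> arcs N} = {g}" using tree_par[OF tp gp] .
  have pary: "{u. (u,y) \<in> arcs N} = {p}" using leaf_par[OF ly py] .
  have parenty: "parent N y = p" unfolding parent_def using set1_the[OF pary] .
  obtain q where qp: "q \<noteq> p" and parr: "{u. (u,r) \<in> arcs N} = {p,q}" using ret_par[OF bn rret pr] by blast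
  have qr: "(q,r) \<in> arcs N" using parr by blast
  have chr: "{w. (r,w) \<in> arcs N} = {x}" using ret_chi[OF rret rx] .
  have nx: "\<And>w. (x,w) \<notin> arcs N" using leaf_nochild[OF nw lx] .
  have ny: "\<And>w. (y,w) \<notin> arcs N" using leaf_nochild[OF nw ly] .
  have pr_ne: "p \<noteq> r" using net_irr[OF nw pr] .
  have px_ne: "p \<noteq> x" using nx pr by blast
  have gr: "g \<noteq> r"
  proof
    assume "g = r" then have "p \<in> {w. (r,w) \<in> arcs N}" using gp by simp
    then show False using chr px_ne by simp
  qed
  define G1 where "G1 = (nodes N, arcs N - {(p,r)})"
  have nG1: "nodes G1 = nodes N" and aG1: "arcs G1 = arcs N - {(p,r)}"
    unfolding G1_def by (simp_all add: nodes_def arcs_def)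
  have pin: "p \<in> nodes N" using net_arcs[OF nw pr] by simp
  have rin: "r \<in> nodes N" using net_arcs[OF nw pr] by simp
  have in1: "{u. (u,p) \<in> arcs G1} = {g}" using pp pr_ne unfolding aG1 by auto
  have out1: "{w. (p,w) \<in> arcs G1} = {y}" using cp ry unfolding aG1 by auto
  define E2 where "E2 = {e \<in> arcs N - {(p,r)}. fst e \<noteq> p \<and> snd e \<noteq> p} \<union> {(g,y)}"
  define G2 where "G2 = (nodes N - {p}, E2)"
  have nG2: "nodes G2 = nodes N - {p}" and aG2: "arcs G2 = E2"
    unfolding G2_def by (simp_all add: nodes_def arcs_def)
  have s1: "suppress G1 p = G2"
  proof -
    have c: "p \<in> nodes G1 \<and> indeg G1 p = 1 \<and> outdeg G1 p = 1"
      using in1 out1 pin nG1 unfolding indeg_def outdeg_def by simp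
    show ?thesis unfolding suppress_def Let_def set1_the[OF in1] set1_the[OF out1]
      using c nG1 aG1 unfolding G2_def E2_def by simp
  qed
  have in2: "{u. (u,r) \<in> arcs G2} = {q}" using parr qp ry pr_ne unfolding aG2 E2_def by auto
  have out2: "{w. (r,w) \<in> arcs G2} = {x}" using chr pr_ne px_ne gr unfolding aG2 E2_def by auto
  have s2: "suppress G2 r = (nodes N - {p} - {r}, {e \<in> E2. fst e \<noteq> r \<and> snd e \<noteq> r} \<union> {(q,x)})"
  proof -
    have c: "r \<in> nodes G2 \<and> indeg G2 r = 1 \<and> outdeg G2 r = 1"
      using in2 out2 rin pr_ne nG2 unfolding indeg_def outdeg_def by auto
    show ?thesis unfolding suppress_def Let_def set1_the[OF in2] set1_the[OF out2]
      using c nG2 aG2 by simp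
  qed
  have "reduce_pair N (x,y) = suppress (suppress G1 p) r"
    unfolding reduce_pair_def G1_def using nch rc parent parenty by (simp add: Let_def)
  then have "reduce_pair N (x,y) = (nodes N - {p} - {r}, {e \<in> E2. fst e \<noteq> r \<and> snd e \<noteq> r} \<union> {(q,x)})"
    using s1 s2 by simp
  then show thesis using that[OF rx pr py gp qr qp tp rret cp pp parx pary parr chr] unfolding E2_def by simp
qed

lemma ret_step:
  assumes bn: "is_binary_network N" and rc: "is_reticulated_cherry N x y" and nch: "\<not> is_cherry N x y"
  shows "is_binary_network (reduce_pair N (x,y)) \<and>
         (\<forall>t'. good (reduce_pair N (x,y)) t' \<longrightarrow> (\<exists>t. good N t))"
proof -
  have nw: "is_network N" using bn by (simp add: is_binary_network_def)
  obtain r p g q where rx: "(r,x) \<in> arcs N" and pr: "(p,r) \<in> arcs N" and py: "(p,y) \<in> arcs N"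
    and gp: "(g,p) \<in> arcs N" and qr: "(q,r) \<in> arcs N" and qp: "q \<noteq> p"
    and tp: "is_tree_node N p" and rret: "is_reticulation N r"
    and cp: "{w. (p,w) \<in> arcs N} = {r,y}" and pp: "{u. (u,p) \<in> arcs N} = {g}"
    and parx: "{u. (u,x) \<in> arcs N} = {r}" and pary: "{u. (u,y) \<in> arcs N} = {p}"
    and parr: "{u. (u,r) \<in> arcs N} = {p,q}" and chr: "{w. (r,w) \<in> arcs N} = {x}"
    and red: "reduce_pair N (x,y) = (nodes N - {p} - {r},
        {e \<in> {e \<in> arcs N - {(p,r)}. fst e \<noteq> p \<and> snd e \<noteq> p} \<union> {(g,y)}. fst e \<noteq> r \<and> snd e \<noteq> r}
         \<union> {(q,x)})"
    using ret_reduce[OF bn rc nch] by blast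
  have lx: "is_leaf N x" and ly: "is_leaf N y" and xy: "x \<noteq> y"
    using rc unfolding is_reticulated_cherry_def by auto
  have pw1: "\<And>w. (p,w) \<in> arcs N \<longleftrightarrow> w = r \<or> w = y" using cp by blast
  have pw2: "\<And>u. (u,p) \<in> arcs N \<longleftrightarrow> u = g" using pp by blast
  have pw3: "\<And>u. (u,x) \<in> arcs N \<longleftrightarrow> u = r" using parx by blast
  have pw4: "\<And>u. (u,y) \<in> arcs N \<longleftrightarrow> u = p" using pary by blast
  have pw5: "\<And>u. (u,r) \<in> arcs N \<longleftrightarrow> u = p \<or> u = q" using parr by blast
  have pw6: "\<And>w. (r,w) \<in> arcs N \<longleftrightarrow> w = x" using chr by blast
  have nx: "\<And>w. (x,w) \<notin> arcs N" using leaf_nochild[OF nw lx] .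
  have ny: "\<And>w. (y,w) \<notin> arcs N" using leaf_nochild[OF nw ly] .
  have d1: "p \<noteq> r" "p \<noteq> x" "p \<noteq> y" "r \<noteq> x" "r \<noteq> y"
    using net_irr[OF nw pr] net_irr[OF nw py] net_irr[OF nw rx] nx ny pr rx by auto
  have d2: "g \<noteq> p" "g \<noteq> r" "g \<noteq> x" "g \<noteq> y"
    using net_irr[OF nw gp] pw6[of p] d1 nx ny gp by auto
  have d3: "q \<noteq> r" "q \<noteq> x" "q \<noteq> y"
    using net_irr[OF nw qr] nx ny qr by auto
  have inV: "x \<in> nodes N" "y \<in> nodes N" "p \<in> nodes N" "g \<in> nodes N" "r \<in> nodes N" "q \<in> nodes N"
    using net_arcs[OF nw rx] net_arcs[OF nw py] net_arcs[OF nw gp] net_arcs[OF nw qr] by auto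
  define V' where "V' = nodes N - {p} - {r}"
  define A' where "A' = {e \<in> {e \<in> arcs N - {(p,r)}. fst e \<noteq> p \<and> snd e \<noteq> p} \<union> {(g,y)}. fst e \<noteq> r \<and> snd e \<noteq> r}
         \<union> {(q,x)}"
  define N' where "N' = reduce_pair N (x,y)"
  have N'eq: "N' = (V', A')" using red unfolding N'_def V'_def A'_def by simp
  have nd: "nodes N' = V'" "arcs N' = A'" using N'eq by (simp_all add: nodes_def arcs_def)
  have memA': "\<And>a b. (a,b) \<in> A' \<longleftrightarrow> ((a,b) \<in> arcs N \<and> a \<noteq> p \<and> b \<noteq> p \<and> a \<noteq> r \<and> b \<noteq> r)
        \<or> (a = g \<and> b = y) \<or> (a = q \<and> b = x)"
    unfolding A'_def using d1 d2 by auto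
  have sub: "V' \<subseteq> nodes N" unfolding V'_def by auto
  have VV: "\<And>v. v \<in> V' \<longleftrightarrow> v \<in> nodes N \<and> v \<noteq> p \<and> v \<noteq> r" unfolding V'_def by auto
  have arcs': "A' \<subseteq> V' \<times> V'"
  proof
    fix e assume "e \<in> A'"
    then obtain a b where e: "e = (a,b)" and ab: "(a,b) \<in> A'" by (cases e) auto
    show "e \<in> V' \<times> V'"
    proof (cases "(a = g \<and> b = y) \<or> (a = q \<and> b = x)")
      case True then show ?thesis using e d1 d2 d3 inV qp VV by auto
    next
      case False
      then have "(a,b) \<in> arcs N" "a \<noteq> p" "b \<noteq> p" "a \<noteq> r" "b \<noteq> r" using ab memA' by auto
      then show ?thesis using e net_arcs[OF nw] VV by auto
    qed
  qed
  have tr: "A' \<subseteq> (arcs N)\<^sup>+"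
  proof
    fix e assume "e \<in> A'"
    then obtain a b where e: "e = (a,b)" and ab: "(a,b) \<in> A'" by (cases e) auto
    show "e \<in> (arcs N)\<^sup>+"
    proof (cases "a = g \<and> b = y")
      case True then show ?thesis using e gp py by (meson r_into_trancl trancl_into_trancl)
    next
      case F1: False
      show ?thesis
      proof (cases "a = q \<and> b = x")
        case True then show ?thesis using e qr rx by (meson r_into_trancl trancl_into_trancl)
      next
        case False then show ?thesis using F1 e ab memA' by auto
      qed
    qed
  qed
  have roots: "\<And>v. is_root N v \<Longrightarrow> v \<in> V'"
  proof -
    fix v assume rv: "is_root N v"
    have "v \<noteq> p" using root_not_tree[OF rv] tp by blast
    moreover have "v \<noteq> r" using root_not_ret[OF rv] rret by blast
    ultimately show "v \<in> V'" using rv VV unfolding is_root_def by auto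
  qed
  have deg: "\<And>w. w \<in> V' \<Longrightarrow> indeg N' w = indeg N w \<and> outdeg N' w = outdeg N w"
  proof -
    fix w assume wV: "w \<in> V'"
    have wn: "w \<noteq> p" "w \<noteq> r" using wV VV by auto
    have "indeg N' w = indeg N w"
    proof (cases "w = y")
      case True
      have "{a. (a,w) \<in> A'} = {g}" using True memA' pw4 d1 d3 xy by auto
      then show ?thesis using True pary unfolding indeg_def nd by simp
    next
      case ny': False
      show ?thesis
      proof (cases "w = x")
        case True
        have "{a. (a,w) \<in> A'} = {q}" using True memA' pw3 d1 d2 xy by auto
        then show ?thesis using True parx unfolding indeg_def nd by simp
      next
        case False
        have "{a. (a,w) \<in> A'} = {a. (a,w) \<in> arcs N}" using False ny' memA' pw1 pw6 wn by auto
        then show ?thesis unfolding indeg_def nd by simp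
      qed
    qed
    moreover have "outdeg N' w = outdeg N w"
    proof -
      let ?S = "{b. (w,b) \<in> arcs N}"
      have fS: "finite ?S" using fin_chi[OF nw] .
      show ?thesis
      proof (cases "w = g")
        case wg: True
        show ?thesis
        proof (cases "w = q")
          case True
          have e: "{b. (w,b) \<in> A'} = insert y (insert x (?S - {r}) - {p})"
            using wg True memA' pw3 pw4 d1 d2 by auto
          have c1: "card (insert x (?S - {r})) = card ?S"
            using card_swap[OF fS, of r x] True qr pw3 d3 by simp
          have "card (insert y (insert x (?S - {r}) - {p})) = card (insert x (?S - {r}))"
            using card_swap[of "insert x (?S - {r})" p y] fS wg gp d1 pw4 d2 xy by simp
          then show ?thesis using e c1 unfolding outdeg_def nd by simp
        next
          case False
          have e: "{b. (w,b) \<in> A'} = insert y (?S - {p})"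
            using wg False memA' pw5 d2 by auto
          then show ?thesis using card_swap[OF fS, of p y] wg gp pw4 d2 unfolding outdeg_def nd by simp
        qed
      next
        case wg: False
        show ?thesis
        proof (cases "w = q")
          case True
          have e: "{b. (w,b) \<in> A'} = insert x (?S - {r})"
            using wg True memA' pw2 d3 wn by auto
          then show ?thesis using card_swap[OF fS, of r x] True qr pw3 d3 unfolding outdeg_def nd by simp
        next
          case False
          have "{b. (w,b) \<in> A'} = ?S" using wg False memA' pw2 pw5 wn by auto
          then show ?thesis unfolding outdeg_def nd by simp
        qed
      qed
    qed
    ultimately show "indeg N' w = indeg N w \<and> outdeg N' w = outdeg N w" by simp
  qed
  note TR = transfer[OF bn N'eq sub arcs' tr roots deg]
  have bn': "is_binary_network N'" using TR(1) .
  have T2: "\<And>w. is_tree_node N' w \<longleftrightarrow> w \<in> V' \<and> is_tree_node N w" using TR(3) by blast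
  have T3: "\<And>w. is_reticulation N' w \<longleftrightarrow> w \<in> V' \<and> is_reticulation N w" using TR(4) by blast
  have T4: "\<And>w. is_leaf N' w \<longleftrightarrow> w \<in> V' \<and> is_leaf N w" using TR(5) by blast
  have ext: "\<exists>t. good N t" if gd: "good N' t'" for t'
  proof -
    note G = good_parts[OF gd, unfolded nd]
    have fin: "finite (nodes N)" using net_fin[OF nw] .
    have finV': "finite V'" using sub fin finite_subset by blast
    define I where "I = {v \<in> V'. \<not> is_leaf N' v}"
    have gV: "g \<in> V'" using VV inV d2 by simp
    have qV: "q \<in> V'" using VV inV d3 qp by simp
    have xV: "x \<in> V'" using VV inV d1 by simp
    have yV: "y \<in> V'" using VV inV d1 by simp
    have "\<not> is_leaf N g" using leaf_nochild[OF nw] gp by blast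
    then have gI: "g \<in> I" unfolding I_def using gV T4 by simp
    have "\<not> is_leaf N q" using leaf_nochild[OF nw] qr by blast
    then have qI: "q \<in> I" unfolding I_def using qV T4 by simp
    obtain m where m: "m < 0" "\<forall>v\<in>I. t' v < m"
      using fresh_neg[of I t'] finV' gI G(6) unfolding I_def by auto
    have xl: "is_leaf N' x" using T4 xV lx by simp
    have yl: "is_leaf N' y" using T4 yV ly by simp
    have hm: "\<And>v. v \<in> V' \<Longrightarrow> \<not> is_leaf N' v \<Longrightarrow> t' v < m" using m unfolding I_def by auto
    have nm: "\<And>v. v \<in> V' \<Longrightarrow> t' v \<noteq> m"
    proof -
      fix v assume "v \<in> V'"
      then show "t' v \<noteq> m" using hm[of v] G(5)[of v] m by (cases "is_leaf N' v") auto
    qed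
    define t where "t = (\<lambda>v. if v = p \<or> v = r then m else t' v)"
    have tp': "t p = m" "t r = m" unfolding t_def by auto
    have tV: "\<And>v. v \<in> V' \<Longrightarrow> t v = t' v" unfolding t_def using VV by auto
    have gm: "t' g < m" using m gI by auto
    have qm: "t' q < m" using m qI by auto
    have xm: "t' x > m" using G(5)[OF xV xl] m by simp
    have ym: "t' y > m" using G(5)[OF yV yl] m by simp
    have key: "\<And>a b. (a,b) \<in> A' \<Longrightarrow> is_reticulation N' b \<Longrightarrow> (a,b) \<in> arcs N"
    proof -
      fix a b assume "(a,b) \<in> A'" "is_reticulation N' b"
      then show "(a,b) \<in> arcs N" using memA'[of a b] leaf_not_ret[OF yl] leaf_not_ret[OF xl] by auto
    qed
    show ?thesis
    proof (intro exI[of _ t] good_intro)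
      fix a b assume ab: "(a,b) \<in> arcs N"
      show "t a \<le> t b \<and> (t a = t b \<longrightarrow> is_reticulation N b)"
      proof (cases "b = p")
        case True then have "a = g" using pw2 ab by simp
        then show ?thesis using True gm tV gV tp' by simp
      next
        case bp: False
        show ?thesis
        proof (cases "b = r")
          case True then have "a = p \<or> a = q" using pw5 ab by simp
          then show ?thesis
          proof
            assume "a = p" then show ?thesis using True tp' rret by simp
          next
            assume "a = q" then show ?thesis using True tp' qm tV qV by simp
          qed
        next
          case br: False
          show ?thesis
          proof (cases "a = p")
            case True then have "b = y" using pw1 ab br by simp
            then show ?thesis using True tp' ym tV yV by simp
          next
            case ap: False
            show ?thesis
            proof (cases "a = r")
              case True then have "b = x" using pw6 ab by simp
              then show ?thesis using True tp' xm tV xV by simp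
            next
              case False
              then have ab': "(a,b) \<in> A'" using ab bp br ap memA' by simp
              then have "a \<in> V'" "b \<in> V'" using arcs' by auto
              then show ?thesis using G(1)[OF ab'] tV T3 by simp
            qed
          qed
        qed
      qed
    next
      fix u assume iu: "is_internal N u"
      show "\<exists>v. (u,v) \<in> arcs N \<and> t u < t v"
      proof (cases "u = p")
        case True then show ?thesis using py tp' ym tV yV by (intro exI[of _ y]) auto
      next
        case up: False
        show ?thesis
        proof (cases "u = r")
          case True then show ?thesis using rx tp' xm tV xV by (intro exI[of _ x]) auto
        next
          case ur: False
          have uV: "u \<in> V'" using iu up ur VV unfolding is_internal_def by auto
          then have "is_internal N' u" using iu T4 nd unfolding is_internal_def by auto
          then obtain v where uv: "(u,v) \<in> A'" "t' u < t' v" using G(2) by blast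
          show ?thesis
          proof (cases "u = g \<and> v = y")
            case True then show ?thesis using gp gm tV uV tp' by (intro exI[of _ p]) auto
          next
            case F1: False
            show ?thesis
            proof (cases "u = q \<and> v = x")
              case True then show ?thesis using qr qm tV uV tp' by (intro exI[of _ r]) auto
            next
              case False
              then have "(u,v) \<in> arcs N" using F1 uv memA' by auto
              moreover have "v \<in> V'" using uv(1) arcs' by auto
              ultimately show ?thesis using uv tV uV by auto
            qed
          qed
        qed
      qed
    next
      fix z u v assume z: "is_reticulation N z" and uz: "(u,z) \<in> arcs N" and vz: "(v,z) \<in> arcs N"
        and uv: "u \<noteq> v"
      show "(t u = t z) \<noteq> (t v = t z)"
      proof (cases "z = r")
        case True
        then have "u = p \<or> u = q" "v = p \<or> v = q" using uz vz pw5 by auto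
        then show ?thesis using True uv tp' qm tV qV qp by auto
      next
        case zr: False
        have zz: "z \<noteq> p" "z \<noteq> x" "z \<noteq> y"
          using z tree_not_ret[OF tp] leaf_not_ret[OF lx] leaf_not_ret[OF ly] by auto
        have zV: "z \<in> V'" using z zz zr VV unfolding is_reticulation_def by auto
        have "u \<noteq> p" "v \<noteq> p" using uz vz pw1 zr zz by auto
        moreover have "u \<noteq> r" "v \<noteq> r" using uz vz pw6 zz by auto
        ultimately have A: "(u,z) \<in> A'" "(v,z) \<in> A'" using uz vz zr zz memA' by auto
        then have "u \<in> V'" "v \<in> V'" using arcs' by auto
        then show ?thesis using G(3)[OF _ A uv] T3 z zV tV by simp
      qed
    next
      fix a b assume aN: "a \<in> nodes N" and bN: "b \<in> nodes N" and ab: "a \<noteq> b" and e: "t a = t b"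
      show "((a, b) \<in> arcs N \<and> is_tree_node N a \<and> is_reticulation N b) \<or>
              ((b, a) \<in> arcs N \<and> is_tree_node N b \<and> is_reticulation N a)"
      proof (cases "a \<in> V'")
        case aV: True
        show ?thesis
        proof (cases "b \<in> V'")
          case bV: True
          have "t' a = t' b" using e tV aV bV by simp
          then have "((a, b) \<in> A' \<and> is_tree_node N' a \<and> is_reticulation N' b) \<or>
                ((b, a) \<in> A' \<and> is_tree_node N' b \<and> is_reticulation N' a)" using G(4) aV bV ab by blast
          then show ?thesis using key T2 T3 by blast
        next
          case False
          then have "t b = m" using bN VV tp' by auto
          then show ?thesis using e tV aV nm by simp
        qed
      next
        case aV: False
        then have ta: "t a = m" and apr: "a = p \<or> a = r" using aN VV tp' by auto
        show ?thesis
        proof (cases "b \<in> V'")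
          case True then show ?thesis using e ta tV[OF True] nm[OF True] by simp
        next
          case False
          then have "b = p \<or> b = r" using bN VV by auto
          then show ?thesis using apr ab pr tp rret by auto
        qed
      qed
    next
      fix v assume vN: "v \<in> nodes N" and lv: "is_leaf N v"
      have "v \<noteq> p" using leaf_not_tree[OF lv] tp by blast
      moreover have "v \<noteq> r" using leaf_not_ret[OF lv] rret by blast
      ultimately have "v \<in> V'" using vN VV by auto
      then show "t v > 0" using G(5) T4 lv tV by simp
    next
      fix v assume vN: "v \<in> nodes N" and lv: "\<not> is_leaf N v"
      show "t v < 0"
      proof (cases "v = p \<or> v = r")
        case True then show ?thesis using tp' m by auto
      next
        case False
        then have "v \<in> V'" using vN VV by auto
        then show ?thesis using G(6) T4 lv tV by simp
      qed
    qed
  qed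
  show ?thesis using bn' ext unfolding N'_def by blast
qed

lemma hs_in: "is_network N \<Longrightarrow> (\<Sum>v\<in>nodes N. indeg N v) = card (arcs N)"
proof -
  assume nw: "is_network N"
  let ?X = "SIGMA v:nodes N. {u. (u,v) \<in> arcs N}"
  have e: "arcs N = (\<lambda>(v,u). (u,v)) ` ?X" using net_arcs[OF nw] by (auto simp: image_iff)
  have i: "inj_on (\<lambda>(v,u). (u,v)) ?X" by (auto simp: inj_on_def)
  have "card (arcs N) = card ?X" using e card_image[OF i] by simp
  also have "\<dots> = (\<Sum>v\<in>nodes N. card {u. (u,v) \<in> arcs N})"
    using card_SigmaI[of "nodes N" "\<lambda>v. {u. (u,v) \<in> arcs N}"] net_fin[OF nw] fin_par[OF nw] by simp
  finally show ?thesis unfolding indeg_def by simp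
qed

lemma hs_out: "is_network N \<Longrightarrow> (\<Sum>v\<in>nodes N. outdeg N v) = card (arcs N)"
proof -
  assume nw: "is_network N"
  let ?X = "SIGMA v:nodes N. {w. (v,w) \<in> arcs N}"
  have e: "arcs N = ?X" using net_arcs[OF nw] by auto
  have "card (arcs N) = card ?X" using e by simp
  also have "\<dots> = (\<Sum>v\<in>nodes N. card {w. (v,w) \<in> arcs N})"
    using card_SigmaI[of "nodes N" "\<lambda>v. {w. (v,w) \<in> arcs N}"] net_fin[OF nw] fin_chi[OF nw] by simp
  finally show ?thesis unfolding outdeg_def by simp
qed

lemma base_case:
  assumes bn: "is_binary_network N" and tr: "is_tree N" and l1: "card (leaves N) = 1"
  shows "\<exists>t. good N t"
proof -
  have nw: "is_network N" using bn by (simp add: is_binary_network_def)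
  have noret: "\<And>v. \<not> is_reticulation N v" using tr by (simp add: is_tree_def)
  have ex: "\<exists>!r. is_root N r" using nw unfolding is_network_def by simp
  then obtain \<rho> where r: "is_root N \<rho>" by blast
  have ru: "\<And>v. is_root N v \<Longrightarrow> v = \<rho>" using ex r by blast
  obtain l where L: "leaves N = {l}" using l1 by (auto simp: card_1_singleton_iff)
  have isl: "\<And>v. is_leaf N v \<longleftrightarrow> v = l" using L unfolding leaves_def by blast
  define V where "V = nodes N"
  have fin: "finite V" using net_fin[OF nw] unfolding V_def .
  have rV: "\<rho> \<in> V" using r unfolding is_root_def V_def by simp
  define Tn where "Tn = {v \<in> V. is_tree_node N v}"
  have cl0: "\<forall>v \<in> nodes N. is_root N v \<or> is_tree_node N v \<or> is_reticulation N v \<or> is_leaf N v"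
    using nw unfolding is_network_def by simp
  have cl: "\<And>v. v \<in> V \<Longrightarrow> v \<noteq> \<rho> \<Longrightarrow> is_tree_node N v \<or> is_leaf N v"
  proof -
    fix v assume "v \<in> V" "v \<noteq> \<rho>"
    then show "is_tree_node N v \<or> is_leaf N v" using cl0 noret[of v] ru[of v] unfolding V_def by auto
  qed
  have lV: "l \<in> V" using isl[of l] unfolding is_leaf_def V_def by simp
  have lr: "l \<noteq> \<rho>" using isl[of l] root_not_leaf[OF r] by auto
  have lnt: "\<not> is_tree_node N l" using leaf_not_tree[of N l] isl[of l] by simp
  have rnt: "\<not> is_tree_node N \<rho>" using root_not_tree[OF r] .
  have split: "V - {\<rho>} = Tn \<union> {l}"
  proof
    show "V - {\<rho>} \<subseteq> Tn \<union> {l}"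
    proof
      fix v assume "v \<in> V - {\<rho>}"
      then have "v \<in> V" "v \<noteq> \<rho>" by auto
      then show "v \<in> Tn \<union> {l}" using cl[of v] isl[of v] unfolding Tn_def by auto
    qed
    show "Tn \<union> {l} \<subseteq> V - {\<rho>}" using lV lr rnt unfolding Tn_def by auto
  qed
  have disj: "Tn \<inter> {l} = {}" using lnt unfolding Tn_def by auto
  have finT: "finite Tn" using fin unfolding Tn_def by simp
  have s1: "(\<Sum>v\<in>V. indeg N v) = indeg N \<rho> + (\<Sum>v\<in>V - {\<rho>}. indeg N v)"
    using sum.remove[OF fin rV] by simp
  have "(\<Sum>v\<in>V - {\<rho>}. indeg N v) = (\<Sum>v\<in>V - {\<rho>}. 1)"
  proof (rule sum.cong)
    fix v assume "v \<in> V - {\<rho>}"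
    then show "indeg N v = 1" using cl[of v] unfolding is_tree_node_def is_leaf_def by auto
  qed simp
  then have s1': "(\<Sum>v\<in>V. indeg N v) = card Tn + 1"
    using s1 r split disj finT unfolding is_root_def by (simp add: card_Un_disjoint)
  have s2: "(\<Sum>v\<in>V. outdeg N v) = outdeg N \<rho> + (\<Sum>v\<in>V - {\<rho>}. outdeg N v)"
    using sum.remove[OF fin rV] by simp
  have "(\<Sum>v\<in>V - {\<rho>}. outdeg N v) = (\<Sum>v\<in>Tn. outdeg N v) + outdeg N l"
    using split disj finT by (simp add: sum.union_disjoint)
  also have "\<dots> = (\<Sum>v\<in>Tn. 2)"
    using bn isl[of l] unfolding is_binary_network_def Tn_def is_leaf_def by simp
  finally have s2': "(\<Sum>v\<in>V. outdeg N v) = 1 + 2 * card Tn"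
    using s2 r unfolding is_root_def by simp
  have "card Tn + 1 = 1 + 2 * card Tn" using s1' s2' hs_in[OF nw] hs_out[OF nw] unfolding V_def by simp
  then have "Tn = {}" using finT by simp
  then have Vrl: "V = {\<rho>, l}" using split rV by auto
  have nopar: "\<And>u. (u,\<rho>) \<notin> arcs N"
    using r fin_par[OF nw, of \<rho>] unfolding is_root_def indeg_def by auto
  obtain w where rw: "(\<rho>,w) \<in> arcs N"
    using r unfolding is_root_def outdeg_def by (metis card_1_singletonE mem_Collect_eq singletonI)
  define t :: "'a \<Rightarrow> real" where "t = (\<lambda>v. if v = \<rho> then -1 else 1)"
  show ?thesis
  proof (intro exI[of _ t] good_intro)
    fix a b assume ab: "(a,b) \<in> arcs N"
    then have "b \<noteq> \<rho>" using nopar by blast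
    moreover have "a \<noteq> b" using net_irr[OF nw ab] .
    moreover have "a \<in> V" "b \<in> V" using net_arcs[OF nw ab] unfolding V_def by auto
    ultimately show "t a \<le> t b \<and> (t a = t b \<longrightarrow> is_reticulation N b)" using Vrl unfolding t_def by auto
  next
    fix u assume iu: "is_internal N u"
    then have "u = \<rho>" using Vrl isl unfolding is_internal_def V_def by auto
    moreover have "w \<noteq> \<rho>" using net_irr[OF nw rw] by simp
    ultimately show "\<exists>v. (u,v) \<in> arcs N \<and> t u < t v" using rw unfolding t_def by auto
  next
    fix r u v assume "is_reticulation N r"
    then show "(t u = t r) \<noteq> (t v = t r)" using noret by simp
  next
    fix a b assume "a \<in> nodes N" "b \<in> nodes N" "a \<noteq> b" "t a = t b"
    then have False using Vrl lr unfolding V_def t_def by auto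
    then show "((a, b) \<in> arcs N \<and> is_tree_node N a \<and> is_reticulation N b) \<or>
              ((b, a) \<in> arcs N \<and> is_tree_node N b \<and> is_reticulation N a)" by simp
  next
    fix v assume "v \<in> nodes N" "is_leaf N v"
    then show "t v > 0" using lr isl unfolding t_def by auto
  next
    fix v assume "v \<in> nodes N" "\<not> is_leaf N v"
    then show "t v < 0" using Vrl isl unfolding t_def V_def by auto
  qed
qed

lemma main_ind:
  "is_binary_network N \<Longrightarrow> is_tree (reduce_seq N S) \<Longrightarrow> card (leaves (reduce_seq N S)) = 1 \<Longrightarrow> \<exists>t. good N t"
proof (induction S arbitrary: N)
  case Nil
  then show ?case using base_case[of N] by (simp add: reduce_seq_def)
next
  case (Cons xy S)
  obtain x y where xy: "xy = (x,y)" by (cases xy)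
  have rs: "reduce_seq N (xy # S) = reduce_seq (reduce_pair N (x,y)) S"
    unfolding reduce_seq_def xy by simp
  have p2: "is_tree (reduce_seq (reduce_pair N (x,y)) S)" using Cons.prems(2) rs by simp
  have p3: "card (leaves (reduce_seq (reduce_pair N (x,y)) S)) = 1" using Cons.prems(3) rs by simp
  show ?case
  proof (cases "is_cherry N x y")
    case True
    note st = cherry_step[OF Cons.prems(1) True]
    have "\<exists>t'. good (reduce_pair N (x,y)) t'" using Cons.IH[OF _ p2 p3] st by blast
    then show ?thesis using st by blast
  next
    case nch: False
    show ?thesis
    proof (cases "is_reticulated_cherry N x y")
      case True
      note st = ret_step[OF Cons.prems(1) True nch]
      have "\<exists>t'. good (reduce_pair N (x,y)) t'" using Cons.IH[OF _ p2 p3] st by blast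
      then show ?thesis using st by blast
    next
      case False
      then have e: "reduce_pair N (x,y) = N" using nch unfolding reduce_pair_def by (simp add: Let_def)
      show ?thesis using Cons.IH[of N] Cons.prems(1) p2 p3 unfolding e by blast
    qed
  qed
qed

theorem mainTheorem3:
  fixes N :: "'a graph"
  assumes "is_binary_network N"
    and "is_orchard N"
  shows "\<exists>t :: 'a \<Rightarrow> real. HGT_consistent N t \<and>
           (\<forall>a \<in> nodes N. \<forall>b \<in> nodes N. a \<noteq> b \<and> t a = t b \<longrightarrow>
              ((a, b) \<in> arcs N \<and> is_tree_node N a \<and> is_reticulation N b) \<or>
              ((b, a) \<in> arcs N \<and> is_tree_node N b \<and> is_reticulation N a))"
proof -
  obtain S where S: "is_tree (reduce_seq N S)" "card (leaves (reduce_seq N S)) = 1"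
    using assms(2) unfolding is_orchard_def by blast
  obtain t where "good N t" using main_ind[OF assms(1) S] by blast
  then show ?thesis unfolding good_def by blast
qed

end
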